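(* Assume $a^2\rho(\mathbf P_1\mathbf E)<1$ and $B\ge B_0:=\dfrac{\bar M\log(a^2)}{\log(c^2/\bar a^2)}$. Define $\mathcal Z_\theta(b):=b^\theta\,\mathbf d^T(\mathbf I-b\mathbf P_1\mathbf E)^{-1}$ (a row vector) and $$\mathbf Q(\theta):=\big[\mathcal Z_\theta(\bar a^2)-\mathcal Z_\theta(c^2)\big]\frac{B}{c^{2\theta}}+\bar M\big[\mathcal Z_\theta(a^2)-\mathcal Z_\theta(1)\big]\in\mathbb R^{1\times n}.$$ If $\mathbf Q(D)<\mathbf 0$ elementwise for some $D\in\mathbb N$, then $\mathcal J_{S_j}^\theta<0$ for every $\theta\in\{1,\dots,D\}$, every reception index $j$, every $x_{S_j}\in\mathbb R$ and every $\gamma_{S_j}\in\{1,\dots,n\}$.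
   Context: Setup. Fix reals $a,L$ with $|a|>1$ and $\bar a:=a+L$ satisfying $0<\bar a^2<1$; fix $c$ with $\bar a^2<c^2<1$, $M>0$, $B>0$, and $\bar M:=M/(a^2-1)$. Plant $x_{k+1}=ax_k+u_k+v_k$, $v_k$ i.i.d., mean $0$, variance $M$, independent of everything else. Sensor decisions $t_k\in\{0,1\}$, receptions $r_k\in\{0,1\}$ ($r_k=0$ if $t_k=0$). Controller $u_k=L\hat x_k^+$, $\hat x_k:=\bar a\hat x_{k-1}^+$, $\hat x_k^+:=x_k$ if $r_k=1$, else $\hat x_k$. Channel state $\gamma_k\in\{1,\dots,n\}$ with $\Pr[\gamma_{k+1}=i\mid\gamma_k=j,t_k=\ell]=(\mathbf P_\ell)_{ij}$, $\mathbf P_0,\mathbf P_1$ column-stochastic; drop probabilities $\mathbf e\in[0,1]^n$ (if $t_k=1$, $r_k=1$ w.p. $1-e_{\gamma_k}$); $\mathbf E:=\mathrm{diag}(\mathbf e)$, $\mathbf d:=\mathbf 1-\mathbf e$, $\mathbf P^0:=\mathbf I$, $\boldsymbol\delta_i$ standard basis vectors, $\rho$ spectral radius. $r_0=1$; $R_k:=\max\{i<k:r_i=1\}$; $S_0:=0$, $S_{j+1}:=\min\{k>S_j:r_k=1\}$. $I_k^+$ is the sensor's post-transmission information at time $k$, which at a reception time $S_j$ contains $x_{S_j}$, $z^+_{S_j}=0$, $S_j$ and $\gamma_{S_j}$. Performance function $h_k:=x_k^2-\max\{c^{2(k-R_k)}x_{R_k}^2,B\}$. Nominal policy $\mathcal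 T_k^D$: $t_i=0$ for $k\le i\le k+D-1$, $t_i=1$ for $i\ge k+D$. Performance-evaluation function: $\mathcal J_{S_j}^\theta:=\mathbb E_{\mathcal T^{\theta-1}_{S_j+1}}[h_{S_{j+1}}\mid I_{S_j}^+]=\sum_{w\ge\theta}H(w,x_{S_j}^2)\,\mathbf d^T(\mathbf P_1\mathbf E)^{w-\theta}\mathbf P_0^{\theta-1}\mathbf P_1\boldsymbol\delta_{\gamma_{S_j}}$, where $H(w,y):=\bar a^{2w}y+\bar M(a^{2w}-1)-\max\{c^{2w}y,B\}$. *)

theory Defs
  imports "Jordan_Normal_Form.Spectral_Radius" "Jordan_Normal_Form.Gauss_Jordan_Elimination"
begin

(* Channel states are indexed 0..n-1 (paper: 1..n). Matrices are JNF matrices. *)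

definition column_stochastic :: "nat \<Rightarrow> real mat \<Rightarrow> bool" where
  "column_stochastic n P \<longleftrightarrow> P \<in> carrier_mat n n \<and>
     (\<forall>i<n. \<forall>j<n. 0 \<le> P $$ (i,j)) \<and> (\<forall>j<n. (\<Sum>i<n. P $$ (i,j)) = 1)"

definition diagE :: "nat \<Rightarrow> real vec \<Rightarrow> real mat" where
  "diagE n e = mat n n (\<lambda>(i,j). if i = j then e $ i else 0)"

definition dvec :: "nat \<Rightarrow> real vec \<Rightarrow> real vec" where
  "dvec n e = vec n (\<lambda>i. 1 - e $ i)"

definition rho :: "real mat \<Rightarrow> real" where
  "rho A = spectral_radius (map_mat complex_of_real A)"

definition Hfun :: "real \<Rightarrow> real \<Rightarrow> real \<Rightarrow> real \<Rightarrow> real \<Rightarrow> nat \<Rightarrow> real \<Rightarrow> real" where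
  "Hfun a abar c Mbar B w y = abar^(2*w) * y + Mbar * (a^(2*w) - 1) - max (c^(2*w) * y) B"

(* Performance-evaluation function J^theta at a reception time with x_{S_j} = x, gamma_{S_j} = g:
   sum_{w >= theta} H(w, x^2) d^T (P1 E)^(w-theta) P0^(theta-1) P1 delta_g  (w = k + theta) *)
definition Jfun :: "nat \<Rightarrow> real \<Rightarrow> real \<Rightarrow> real \<Rightarrow> real \<Rightarrow> real \<Rightarrow> real mat \<Rightarrow> real mat \<Rightarrow> real vec
                     \<Rightarrow> nat \<Rightarrow> real \<Rightarrow> nat \<Rightarrow> real" where
  "Jfun n a abar c Mbar B P0 P1 e \<theta> x g =
     (\<Sum>k. Hfun a abar c Mbar B (k + \<theta>) (x^2) *
        (dvec n e \<bullet> (((P1 * diagE n e) ^\<^sub>m k) * (P0 ^\<^sub>m (\<theta> - 1)) * P1 *\<^sub>v unit_vec n g)))"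

(* Z_theta(b) = b^theta d^T (I - b P1 E)^{-1}, as a (column) vector of its n entries *)
definition Zvec :: "nat \<Rightarrow> real mat \<Rightarrow> real vec \<Rightarrow> nat \<Rightarrow> real \<Rightarrow> real vec" where
  "Zvec n P1 e \<theta> b = (b^\<theta>) \<cdot>\<^sub>v
     ((the (mat_inverse (1\<^sub>m n - b \<cdot>\<^sub>m (P1 * diagE n e))))\<^sup>T *\<^sub>v dvec n e)"

definition Qvec :: "nat \<Rightarrow> real \<Rightarrow> real \<Rightarrow> real \<Rightarrow> real \<Rightarrow> real \<Rightarrow> real mat \<Rightarrow> real vec \<Rightarrow> nat \<Rightarrow> real vec" where
  "Qvec n a abar c Mbar B P1 e \<theta> =
     (B / c^(2*\<theta>)) \<cdot>\<^sub>v (Zvec n P1 e \<theta> (abar^2) - Zvec n P1 e \<theta> (c^2))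
     + Mbar \<cdot>\<^sub>v (Zvec n P1 e \<theta> (a^2) - Zvec n P1 e \<theta> 1)"

end

theory Submission
  imports Defs
begin

lemma avg_mono:
  fixes f :: "nat \<Rightarrow> real"
  assumes mono: "\<And>i j. i \<le> j \<Longrightarrow> f i \<le> f j" and km: "k \<le> m"
  shows "real m * (\<Sum>j<k. f j) \<le> real k * (\<Sum>j<m. f j)"
  using km
proof (induction m rule: dec_induct)
  case base
  then show ?case by simp
next
  case (step m)
  have "(\<Sum>j<k. f j) \<le> (\<Sum>j<k. f m)"
    by (rule sum_mono) (use step mono in auto)
  hence "(\<Sum>j<k. f j) \<le> real k * f m" by simp
  with step.IH show ?case by (simp add: algebra_simps)
qed

lemma pow_convex:
  fixes x :: real
  assumes x: "0 \<le> x" and td: "\<theta> \<le> D"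
  shows "real D * x^\<theta> \<le> real (D - \<theta>) + real \<theta> * x^D"
proof -
  have e1: "x^\<theta> - 1 = (x - 1) * (\<Sum>j<\<theta>. x^j)" by (rule power_diff_1_eq)
  have e2: "x^D - 1 = (x - 1) * (\<Sum>j<D. x^j)" by (rule power_diff_1_eq)
  have key: "real D * (x^\<theta> - 1) \<le> real \<theta> * (x^D - 1)"
  proof (cases "x \<ge> 1")
    case True
    have "real D * (\<Sum>j<\<theta>. x^j) \<le> real \<theta> * (\<Sum>j<D. x^j)"
      by (rule avg_mono[OF _ td]) (use True in \<open>auto intro: power_increasing\<close>)
    hence "(x - 1) * (real D * (\<Sum>j<\<theta>. x^j)) \<le> (x - 1) * (real \<theta> * (\<Sum>j<D. x^j))"
      using True by (intro mult_left_mono) auto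
    then show ?thesis unfolding e1 e2 by (simp add: algebra_simps)
  next
    case False
    have "real D * (\<Sum>j<\<theta>. -(x^j)) \<le> real \<theta> * (\<Sum>j<D. -(x^j))"
      by (rule avg_mono[OF _ td]) (use False x in \<open>auto intro: power_decreasing\<close>)
    hence "real \<theta> * (\<Sum>j<D. x^j) \<le> real D * (\<Sum>j<\<theta>. x^j)"
      by (simp add: sum_negf)
    hence "(x - 1) * (real D * (\<Sum>j<\<theta>. x^j)) \<le> (x - 1) * (real \<theta> * (\<Sum>j<D. x^j))"
      using False by (intro mult_left_mono_neg) auto
    then show ?thesis unfolding e1 e2 by (simp add: algebra_simps)
  qed
  have "real (D - \<theta>) = real D - real \<theta>" using td by simp
  with key show ?thesis by (simp add: algebra_simps)
qed

lemma smult_pow_mat: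
  fixes x :: "'a :: comm_ring_1"
  assumes A: "A \<in> carrier_mat n n"
  shows "(x \<cdot>\<^sub>m A) ^\<^sub>m k = (x^k) \<cdot>\<^sub>m (A ^\<^sub>m k)"
proof (induction k)
  case 0
  show ?case by (rule eq_matI) auto
next
  case (Suc k)
  have Ak: "A ^\<^sub>m k \<in> carrier_mat n n" using A by auto
  have "(x \<cdot>\<^sub>m A) ^\<^sub>m Suc k = (x^k \<cdot>\<^sub>m (A ^\<^sub>m k)) * (x \<cdot>\<^sub>m A)" using Suc by simp
  also have "\<dots> = (x^Suc k) \<cdot>\<^sub>m (A ^\<^sub>m k * A)"
    by (rule eq_matI) (use A Ak in \<open>auto simp: scalar_prod_def sum_distrib_left algebra_simps intro!: sum.cong\<close>)
  finally show ?case by simp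
qed

lemma spectral_radius_nonneg:
  assumes A: "A \<in> carrier_mat n n" and n: "n > 0"
  shows "0 \<le> spectral_radius A"
  using spectral_radius_mem_max(1)[OF A n] by auto

lemma spectral_radius_smult:
  assumes A: "(A :: complex mat) \<in> carrier_mat n n" and n: "n > 0" and s: "s > 0"
  shows "spectral_radius (complex_of_real s \<cdot>\<^sub>m A) \<le> s * spectral_radius A"
proof -
  have sA: "complex_of_real s \<cdot>\<^sub>m A \<in> carrier_mat n n" using A by auto
  from spectral_radius_mem_max(1)[OF sA n] obtain \<mu> where
    mu: "\<mu> \<in> spectrum (complex_of_real s \<cdot>\<^sub>m A)" and eq: "spectral_radius (complex_of_real s \<cdot>\<^sub>m A) = norm \<mu>"
    by auto
  from mu obtain v where ev: "eigenvector (complex_of_real s \<cdot>\<^sub>m A) v \<mu>"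
    unfolding spectrum_def eigenvalue_def by auto
  hence v: "v \<in> carrier_vec n" "v \<noteq> 0\<^sub>v n" and eqv: "(complex_of_real s \<cdot>\<^sub>m A) *\<^sub>v v = \<mu> \<cdot>\<^sub>v v"
    unfolding eigenvector_def using A by auto
  have "A *\<^sub>v v = (\<mu> / complex_of_real s) \<cdot>\<^sub>v v"
  proof (rule eq_vecI)
    fix i assume i: "i < dim_vec ((\<mu> / complex_of_real s) \<cdot>\<^sub>v v)"
    hence i': "i < n" using v by auto
    have "((complex_of_real s \<cdot>\<^sub>m A) *\<^sub>v v) $ i = (\<mu> \<cdot>\<^sub>v v) $ i" using eqv by simp
    hence "complex_of_real s * (row A i \<bullet> v) = \<mu> * v $ i"
      using i' A v by (auto simp: scalar_prod_def sum_distrib_left algebra_simps)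
    thus "(A *\<^sub>v v) $ i = ((\<mu> / complex_of_real s) \<cdot>\<^sub>v v) $ i"
      using i' A v s by (auto simp: field_simps)
  qed (use A v in auto)
  hence "eigenvector A v (\<mu> / complex_of_real s)" unfolding eigenvector_def using A v by auto
  hence "norm (\<mu> / complex_of_real s) \<in> norm ` spectrum A"
    unfolding spectrum_def eigenvalue_def by auto
  from spectral_radius_mem_max(2)[OF A n this]
  have "norm \<mu> / s \<le> spectral_radius A" using s by (simp add: norm_divide)
  thus ?thesis using eq s by (simp add: field_simps)
qed

lemma decay:
  assumes A: "A \<in> carrier_mat n n" and n: "n > 0" and x: "x > 0" and xr: "x * rho A < 1"
  shows "\<exists>C s. x < s \<and> (\<forall>k i j. i < n \<longrightarrow> j < n \<longrightarrow> \<bar>(A ^\<^sub>m k) $$ (i,j)\<bar> \<le> C / s^k)"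
proof -
  define Ac where "Ac = map_mat complex_of_real A"
  have Ac: "Ac \<in> carrier_mat n n" using A unfolding Ac_def by auto
  define r where "r = spectral_radius Ac"
  have r0: "0 \<le> r" unfolding r_def by (rule spectral_radius_nonneg[OF Ac n])
  have xr': "x * r < 1" using xr unfolding rho_def r_def Ac_def .
  define s where "s = 2 * x / (1 + x * r)"
  have pos: "0 < 1 + x * r" using r0 x by (simp add: add_pos_nonneg)
  have s0: "s > 0" unfolding s_def using x pos by simp
  have xs: "x < s" unfolding s_def using x pos xr' by (simp add: field_simps)
  have sr: "s * r < 1" unfolding s_def using x pos xr' r0 by (simp add: field_simps)
  define Bc where "Bc = complex_of_real s \<cdot>\<^sub>m Ac"
  have Bc: "Bc \<in> carrier_mat n n" using Ac unfolding Bc_def by auto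
  have "spectral_radius Bc \<le> s * r" unfolding Bc_def r_def by (rule spectral_radius_smult[OF Ac n s0])
  hence "spectral_radius Bc < 1" using sr by simp
  from spectral_radius_jnf_norm_bound_less_1_upper_triangular[OF Bc this]
  obtain C where C: "\<And>k. norm_bound (Bc ^\<^sub>m k) C" by auto
  have "\<forall>k i j. i < n \<longrightarrow> j < n \<longrightarrow> \<bar>(A ^\<^sub>m k) $$ (i,j)\<bar> \<le> C / s^k"
  proof (intro allI impI)
    fix k i j assume i: "i < n" and j: "j < n"
    have pw: "Ac ^\<^sub>m k = map_mat complex_of_real (A ^\<^sub>m k)"
      unfolding Ac_def by (rule of_real_hom.mat_hom_pow[OF A, symmetric])
    have "Bc ^\<^sub>m k = (complex_of_real s ^ k) \<cdot>\<^sub>m (Ac ^\<^sub>m k)"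
      unfolding Bc_def by (rule smult_pow_mat[OF Ac])
    hence ent: "(Bc ^\<^sub>m k) $$ (i,j) = complex_of_real (s^k * (A ^\<^sub>m k) $$ (i,j))"
      using i j A pw by simp
    have "norm ((Bc ^\<^sub>m k) $$ (i,j)) \<le> C"
      using C[of k] i j Bc unfolding norm_bound_def by auto
    hence "s^k * \<bar>(A ^\<^sub>m k) $$ (i,j)\<bar> \<le> C" unfolding ent using s0 by (simp add: abs_mult norm_mult norm_power)
    thus "\<bar>(A ^\<^sub>m k) $$ (i,j)\<bar> \<le> C / s^k" using s0 by (simp add: field_simps)
  qed
  with xs show ?thesis by blast
qed

lemma cs_mult:
  assumes X: "column_stochastic n X" and Y: "column_stochastic n Y"
  shows "column_stochastic n (X * Y)"
proof -
  have Xc: "X \<in> carrier_mat n n" and Yc: "Y \<in> carrier_mat n n"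
    using X Y unfolding column_stochastic_def by auto
  have ent: "i < n \<Longrightarrow> j < n \<Longrightarrow> (X * Y) $$ (i,j) = (\<Sum>m<n. X $$ (i,m) * Y $$ (m,j))" for i j
    using Xc Yc by (simp add: scalar_prod_def lessThan_atLeast0)
  have nn: "\<forall>i<n. \<forall>j<n. 0 \<le> (X * Y) $$ (i,j)"
    using X Y unfolding column_stochastic_def by (auto simp: ent intro!: sum_nonneg mult_nonneg_nonneg)
  have cs: "(\<Sum>i<n. (X * Y) $$ (i,j)) = 1" if j: "j < n" for j
  proof -
    have "(\<Sum>i<n. (X * Y) $$ (i,j)) = (\<Sum>i<n. \<Sum>m<n. X $$ (i,m) * Y $$ (m,j))" using j by (simp add: ent)
    also have "\<dots> = (\<Sum>m<n. (\<Sum>i<n. X $$ (i,m)) * Y $$ (m,j))" by (subst sum.swap) (simp add: sum_distrib_right)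
    also have "\<dots> = (\<Sum>m<n. Y $$ (m,j))" using X unfolding column_stochastic_def by simp
    also have "\<dots> = 1" using Y j unfolding column_stochastic_def by simp
    finally show ?thesis .
  qed
  show ?thesis unfolding column_stochastic_def using Xc Yc nn cs by auto
qed

lemma cs_one: "column_stochastic n (1\<^sub>m n)"
  unfolding column_stochastic_def by (auto simp: sum.delta)

lemma cs_pow: assumes X: "column_stochastic n X" shows "column_stochastic n (X ^\<^sub>m k)"
proof (induction k)
  case 0
  have "dim_row X = n" using X unfolding column_stochastic_def by auto
  thus ?case using cs_one by simp
next
  case (Suc k) thus ?case using cs_mult[OF Suc X] by simp
qed

locale core =
  fixes n :: nat and a abar c Mbar B :: real and P1 :: "real mat" and e :: "real vec"
  assumes n: "n \<ge> 1" and a2: "1 < a^2" and ab: "abar^2 < c^2" and c2: "c^2 < 1"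
    and Mb: "0 \<le> Mbar" and Bp: "0 < B"
    and P1: "column_stochastic n P1" and e: "e \<in> carrier_vec n"
    and e01: "\<forall>i<n. 0 \<le> e $ i \<and> e $ i \<le> 1"
    and rho: "a^2 * rho (P1 * diagE n e) < 1"
begin

definition "A = P1 * diagE n e"
definition "W k i = (\<Sum>l<n. dvec n e $ l * (A ^\<^sub>m k) $$ (l,i))"

lemma P1c: "P1 \<in> carrier_mat n n" using P1 unfolding column_stochastic_def by auto
lemma A_carrier[simp]: "A \<in> carrier_mat n n" unfolding A_def diagE_def using P1c by auto
lemma Apow_carrier[simp]: "A ^\<^sub>m k \<in> carrier_mat n n" by simp
lemma dimA[simp]: "dim_row A = n" "dim_col A = n" by (metis A_carrier carrier_matD(1), metis A_carrier carrier_matD(2))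
lemma dimAp[simp]: "dim_row (A ^\<^sub>m k) = n" "dim_col (A ^\<^sub>m k) = n" using Apow_carrier by auto
lemma Apow_Suc_ent: "l < n \<Longrightarrow> i < n \<Longrightarrow>
   (A ^\<^sub>m Suc k) $$ (l,i) = (\<Sum>m<n. (A ^\<^sub>m k) $$ (l,m) * A $$ (m,i))"
  by (simp add: scalar_prod_def lessThan_atLeast0)

lemma A_ent: assumes "l < n" "i < n" shows "A $$ (l,i) = P1 $$ (l,i) * e $ i"
proof -
  have "A $$ (l,i) = (\<Sum>m<n. P1 $$ (l,m) * (if m = i then e $ i else 0))"
    unfolding A_def diagE_def using assms P1c
    by (auto simp: scalar_prod_def lessThan_atLeast0 intro!: sum.cong)
  also have "\<dots> = P1 $$ (l,i) * e $ i"
    by (simp add: if_distrib[where f="\<lambda>t. _ * t"] sum.delta' assms cong: if_cong)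
  finally show ?thesis .
qed

lemma A_nonneg: assumes "l < n" "i < n" shows "0 \<le> A $$ (l,i)"
  using assms P1 e01 unfolding A_ent[OF assms] column_stochastic_def by auto

lemma A_colsum: assumes "i < n" shows "(\<Sum>l<n. A $$ (l,i)) = e $ i"
proof -
  have "(\<Sum>l<n. A $$ (l,i)) = (\<Sum>l<n. P1 $$ (l,i)) * e $ i"
    using assms by (simp add: A_ent sum_distrib_right)
  thus ?thesis using P1 assms unfolding column_stochastic_def by auto
qed

lemma Apow_nonneg: assumes "l < n" "i < n" shows "0 \<le> (A ^\<^sub>m k) $$ (l,i)"
  using assms
proof (induction k arbitrary: l i)
  case 0
  then show ?case by simp
next
  case (Suc k)
  have "(A ^\<^sub>m Suc k) $$ (l,i) = (\<Sum>m<n. (A ^\<^sub>m k) $$ (l,m) * A $$ (m,i))"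
    using Suc.prems by (rule Apow_Suc_ent)
  also have "\<dots> \<ge> 0" using Suc by (auto intro!: sum_nonneg mult_nonneg_nonneg A_nonneg)
  finally show ?case .
qed

lemma d_ent: "l < n \<Longrightarrow> dvec n e $ l = 1 - e $ l" unfolding dvec_def by simp
lemma d_nonneg: "l < n \<Longrightarrow> 0 \<le> dvec n e $ l" using e01 by (simp add: d_ent)
lemma d_le1: "l < n \<Longrightarrow> dvec n e $ l \<le> 1" using e01 by (simp add: d_ent)

lemma W_nonneg: "i < n \<Longrightarrow> 0 \<le> W k i"
  unfolding W_def by (auto intro!: sum_nonneg mult_nonneg_nonneg d_nonneg Apow_nonneg)

lemma W_0: "i < n \<Longrightarrow> W 0 i = dvec n e $ i"
  unfolding W_def by (simp add: if_distrib[where f="\<lambda>t. _ * t"] sum.delta' cong: if_cong)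

lemma W_Suc: assumes i: "i < n" shows "W (Suc k) i = (\<Sum>m<n. W k m * A $$ (m,i))"
proof -
  have "W (Suc k) i = (\<Sum>l<n. dvec n e $ l * (\<Sum>m<n. (A ^\<^sub>m k) $$ (l,m) * A $$ (m,i)))"
    unfolding W_def using i by (intro sum.cong refl) (subst Apow_Suc_ent, auto)
  also have "\<dots> = (\<Sum>m<n. \<Sum>l<n. dvec n e $ l * (A ^\<^sub>m k) $$ (l,m) * A $$ (m,i))"
    by (simp add: sum_distrib_left mult.assoc) (rule sum.swap)
  also have "\<dots> = (\<Sum>m<n. W k m * A $$ (m,i))"
    unfolding W_def by (simp add: sum_distrib_right)
  finally show ?thesis .
qed

lemma decayA: "\<exists>C s. a^2 < s \<and> (\<forall>k i j. i < n \<longrightarrow> j < n \<longrightarrow> \<bar>(A ^\<^sub>m k) $$ (i,j)\<bar> \<le> C / s^k)"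
proof -
  have "a \<noteq> 0" using a2 by auto
  thus ?thesis using decay[OF A_carrier _ _ rho[folded A_def]] n a2 by auto
qed


lemma bounds: "\<exists>K s. a^2 < s \<and> 0 \<le> K \<and> (\<forall>k i. i < n \<longrightarrow> W k i \<le> K / s^k) \<and>
   (\<forall>k l i. l < n \<longrightarrow> i < n \<longrightarrow> \<bar>(A ^\<^sub>m k) $$ (l,i)\<bar> \<le> K / s^k)"
proof -
  obtain C s where s: "a^2 < s" and C: "\<And>k i j. i < n \<Longrightarrow> j < n \<Longrightarrow> \<bar>(A ^\<^sub>m k) $$ (i,j)\<bar> \<le> C / s^k"
    using decayA by blast
  have n0: "0 < n" using n by simp
  have C0: "0 \<le> C" using C[OF n0 n0, of 0] by simp
  have s0: "0 < s" using s a2 by simp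
  define K where "K = real n * C"
  have "\<forall>k i. i < n \<longrightarrow> W k i \<le> K / s^k"
  proof (intro allI impI)
    fix k i assume i: "i < n"
    have "W k i \<le> (\<Sum>l<n. C / s^k)" unfolding W_def
    proof (rule sum_mono)
      fix l assume l: "l \<in> {..<n}"
      have "dvec n e $ l * (A ^\<^sub>m k) $$ (l,i) \<le> 1 * \<bar>(A ^\<^sub>m k) $$ (l,i)\<bar>"
        using l i d_le1 d_nonneg Apow_nonneg by (intro mult_mono) auto
      also have "\<dots> \<le> C / s^k" using C l i by auto
      finally show "dvec n e $ l * (A ^\<^sub>m k) $$ (l,i) \<le> C / s^k" .
    qed
    thus "W k i \<le> K / s^k" unfolding K_def by simp
  qed
  moreover have "\<forall>k l i. l < n \<longrightarrow> i < n \<longrightarrow> \<bar>(A ^\<^sub>m k) $$ (l,i)\<bar> \<le> K / s^k"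
  proof (intro allI impI)
    fix k l i assume "l < n" "i < n"
    hence "\<bar>(A ^\<^sub>m k) $$ (l,i)\<bar> \<le> C / s^k" using C by auto
    also have "\<dots> \<le> K / s^k" unfolding K_def using n C0 s0
      by (intro divide_right_mono) (auto intro: mult_left_le_one_le[of C] simp: mult_le_cancel_right1)
    finally show "\<bar>(A ^\<^sub>m k) $$ (l,i)\<bar> \<le> K / s^k" .
  qed
  moreover have "0 \<le> K" unfolding K_def using C0 by simp
  ultimately show ?thesis using s by blast
qed

lemma summable_gen:
  fixes f g :: "nat \<Rightarrow> real"
  assumes f: "\<And>k. \<bar>f k\<bar> \<le> K' * (a^2)^k"
    and g: "\<And>k. \<bar>g k\<bar> \<le> K / s^k" and s: "a^2 < s"
  shows "summable (\<lambda>k. f k * g k)"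
proof (rule summable_comparison_test)
  have s0: "0 < s" using s a2 by simp
  have q: "0 \<le> a^2 / s" "a^2 / s < 1" using s0 s by auto
  show "summable (\<lambda>k. K' * K * (a^2 / s)^k)"
    by (rule summable_mult) (rule summable_geometric, use q in auto)
  have "\<forall>k. norm (f k * g k) \<le> K' * K * (a^2 / s)^k"
  proof
    fix k
    have "norm (f k * g k) = \<bar>f k\<bar> * \<bar>g k\<bar>" by (simp add: abs_mult)
    also have "\<dots> \<le> (K' * (a^2)^k) * (K / s^k)"
      by (rule mult_mono[OF f g]) (simp_all add: order_trans[OF abs_ge_zero f])
    also have "\<dots> = K' * K * (a^2 / s)^k" by (simp add: power_divide)
    finally show "norm (f k * g k) \<le> K' * K * (a^2 / s)^k" .
  qed
  thus "\<exists>N. \<forall>k\<ge>N. norm (f k * g k) \<le> K' * K * (a^2 / s)^k" by blast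
qed

lemma summable_W:
  assumes i: "i < n" and f: "\<And>k. \<bar>f k\<bar> \<le> K' * (a^2)^k"
  shows "summable (\<lambda>k. f k * W k i)"
proof -
  obtain K s where s: "a^2 < s" "0 \<le> K" and b: "\<And>k. W k i \<le> K / s^k"
    using bounds i by blast
  show ?thesis
    by (rule summable_gen[OF f _ s(1), of _ K]) (use b W_nonneg[OF i] in auto)
qed

lemma summable_Ap:
  assumes l: "l < n" and i: "i < n" and f: "\<And>k. \<bar>f k\<bar> \<le> K' * (a^2)^k"
  shows "summable (\<lambda>k. f k * (A ^\<^sub>m k) $$ (l,i))"
proof -
  obtain K s where s: "a^2 < s" "0 \<le> K" and b: "\<And>k. \<bar>(A ^\<^sub>m k) $$ (l,i)\<bar> \<le> K / s^k"
    using bounds l i by blast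
  show ?thesis by (rule summable_gen[OF f b s(1)])
qed


definition "Nm b = mat n n (\<lambda>(l,i). \<Sum>k. b^k * (A ^\<^sub>m k) $$ (l,i))"

lemma summ_b: assumes b: "\<bar>b\<bar> \<le> a^2" and l: "l < n" and i: "i < n"
  shows "summable (\<lambda>k. b^k * (A ^\<^sub>m k) $$ (l,i))"
proof (rule summable_Ap[OF l i, of _ 1])
  fix k show "\<bar>b^k\<bar> \<le> 1 * (a^2)^k" using b by (simp add: power_abs power_mono)
qed

lemma Nm_inv: assumes b: "\<bar>b\<bar> \<le> a^2"
  shows "Nm b * (1\<^sub>m n - b \<cdot>\<^sub>m A) = 1\<^sub>m n"
proof (rule eq_matI)
  fix l i assume l: "l < dim_row (1\<^sub>m n :: real mat)" and i: "i < dim_col (1\<^sub>m n :: real mat)"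
  hence l: "l < n" and i: "i < n" by auto
  define N where "N l i = (\<Sum>k. b^k * (A ^\<^sub>m k) $$ (l,i))" for l i
  have Nent: "m < n \<Longrightarrow> Nm b $$ (l,m) = N l m" for m unfolding Nm_def N_def using l by simp
  have "(Nm b * (1\<^sub>m n - b \<cdot>\<^sub>m A)) $$ (l,i) = (\<Sum>m<n. N l m * ((if m = i then 1 else 0) - b * A $$ (m,i)))"
    using l i by (simp add: scalar_prod_def lessThan_atLeast0 Nent Nm_def N_def)
  also have "\<dots> = (\<Sum>m<n. N l m * (if m = i then 1 else 0)) - b * (\<Sum>m<n. N l m * A $$ (m,i))"
    by (simp add: algebra_simps sum_subtractf sum_distrib_left)
  also have "(\<Sum>m<n. N l m * (if m = i then 1 else 0)) = N l i"
    using i by (simp add: if_distrib[where f="\<lambda>t. _ * t"] sum.delta' cong: if_cong)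
  also have "(\<Sum>m<n. N l m * A $$ (m,i)) = (\<Sum>m<n. \<Sum>k. b^k * (A ^\<^sub>m k) $$ (l,m) * A $$ (m,i))"
    unfolding N_def
    by (intro sum.cong refl, subst suminf_mult2) (use summ_b[OF b l] in auto)
  also have "\<dots> = (\<Sum>k. \<Sum>m<n. b^k * (A ^\<^sub>m k) $$ (l,m) * A $$ (m,i))"
    by (rule suminf_sum[symmetric]) (use summ_b[OF b l] in \<open>auto intro: summable_mult2\<close>)
  also have "\<dots> = (\<Sum>k. b^k * (A ^\<^sub>m Suc k) $$ (l,i))"
    by (intro suminf_cong) (simp only: Apow_Suc_ent[OF l i] sum_distrib_left mult.assoc)
  also have "b * \<dots> = (\<Sum>k. b^Suc k * (A ^\<^sub>m Suc k) $$ (l,i))"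
  proof -
    have "summable (\<lambda>k. \<Sum>m<n. b^k * (A ^\<^sub>m k) $$ (l,m) * A $$ (m,i))"
      by (intro summable_sum summable_mult2 summ_b[OF b l]) auto
    hence S1: "summable (\<lambda>k. b^k * (A ^\<^sub>m Suc k) $$ (l,i))"
      by (simp only: Apow_Suc_ent[OF l i] sum_distrib_left mult.assoc)
    show ?thesis by (subst suminf_mult[OF S1, symmetric]) (simp add: mult.assoc)
  qed
  also have "N l i = b^0 * (A ^\<^sub>m 0) $$ (l,i) + (\<Sum>k. b^Suc k * (A ^\<^sub>m Suc k) $$ (l,i))"
    unfolding N_def using suminf_split_head[OF summ_b[OF b l i]] by simp
  finally show "(Nm b * (1\<^sub>m n - b \<cdot>\<^sub>m A)) $$ (l,i) = 1\<^sub>m n $$ (l,i)" using l i by simp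
qed (auto simp: Nm_def)

lemma Nm_carrier[simp]: "Nm b \<in> carrier_mat n n" unfolding Nm_def by simp
lemma dimNm[simp]: "dim_row (Nm b) = n" "dim_col (Nm b) = n" unfolding Nm_def by simp_all

lemma inv_eq: assumes b: "\<bar>b\<bar> \<le> a^2"
  shows "the (mat_inverse (1\<^sub>m n - b \<cdot>\<^sub>m A)) = Nm b"
proof -
  define M where "M = 1\<^sub>m n - b \<cdot>\<^sub>m A"
  have M: "M \<in> carrier_mat n n" unfolding M_def by auto
  have NM: "Nm b * M = 1\<^sub>m n" unfolding M_def by (rule Nm_inv[OF b])
  have MN: "M * Nm b = 1\<^sub>m n" by (rule mat_mult_left_right_inverse[OF Nm_carrier M NM])
  have "det M * det (Nm b) = 1" using det_mult[OF M Nm_carrier, of b] MN by simp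
  hence "det M \<noteq> 0" by auto
  from det_non_zero_imp_unit[OF M this] have U: "M \<in> Units (ring_mat TYPE(real) n undefined)" .
  show ?thesis
  proof (cases "mat_inverse M")
    case None
    have "M \<notin> Units (ring_mat TYPE(real) n ())" by (rule mat_inverse(1)[OF M None])
    moreover have "M \<in> Units (ring_mat TYPE(real) n ())" by (rule det_non_zero_imp_unit[OF M \<open>det M \<noteq> 0\<close>])
    ultimately have False by blast
    thus ?thesis ..
  next
    case (Some X)
    from mat_inverse(2)[OF M Some] have XM: "X * M = 1\<^sub>m n" and X: "X \<in> carrier_mat n n" by auto
    have "X = X * (M * Nm b)" using MN X by simp
    also have "\<dots> = (X * M) * Nm b" by (rule assoc_mult_mat[OF X M Nm_carrier, symmetric])
    also have "\<dots> = Nm b" using XM by simp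
    finally show ?thesis using Some unfolding M_def by simp
  qed
qed

lemma Zvec_eq: assumes b: "\<bar>b\<bar> \<le> a^2" and i: "i < n"
  shows "Zvec n P1 e D b $ i = b^D * (\<Sum>k. b^k * W k i)"
proof -
  have "Zvec n P1 e D b $ i = b^D * (\<Sum>l<n. Nm b $$ (l,i) * dvec n e $ l)"
    unfolding Zvec_def A_def[symmetric] inv_eq[OF b] using i
    by (simp add: scalar_prod_def lessThan_atLeast0 dvec_def del: Nm_def)
  also have "(\<Sum>l<n. Nm b $$ (l,i) * dvec n e $ l) = (\<Sum>l<n. \<Sum>k. dvec n e $ l * (b^k * (A ^\<^sub>m k) $$ (l,i)))"
    using i by (intro sum.cong refl) (auto simp: Nm_def suminf_mult[symmetric] summ_b[OF b] mult.commute)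
  also have "\<dots> = (\<Sum>k. \<Sum>l<n. dvec n e $ l * (b^k * (A ^\<^sub>m k) $$ (l,i)))"
    by (rule suminf_sum[symmetric]) (use summ_b[OF b _ i] in \<open>auto intro: summable_mult\<close>)
  also have "\<dots> = (\<Sum>k. b^k * W k i)"
    unfolding W_def by (intro suminf_cong) (simp add: sum_distrib_left algebra_simps)
  finally show ?thesis .
qed


definition "H w y = Hfun a abar c Mbar B w y"
definition "Jc \<theta> i y = (\<Sum>k. H (k+\<theta>) y * W k i)"

lemma c2pos: "0 < c^2" using ab by (smt (verit) zero_le_power2)
lemma ab2nn: "0 \<le> abar^2" by simp
lemma ab2le1: "(abar^2)^w \<le> 1"
proof -
  have "abar^2 \<le> 1" using ab c2 by linarith
  thus ?thesis by (rule power_le_one[OF ab2nn])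
qed
lemma c2le1: "(c^2)^w \<le> 1"
proof -
  have "c^2 \<le> 1" using c2 by linarith
  thus ?thesis by (rule power_le_one[OF zero_le_power2])
qed
lemma a2ge1: "1 \<le> (a^2)^w"
proof -
  have "1 \<le> a^2" using a2 by linarith
  thus ?thesis by (rule one_le_power)
qed
lemma abc: "(abar^2)^w \<le> (c^2)^w"
proof -
  have "abar^2 \<le> c^2" using ab by linarith
  thus ?thesis by (rule power_mono[OF _ ab2nn])
qed

lemma H_alt: "H w y = (abar^2)^w * y + Mbar * ((a^2)^w - 1) - max ((c^2)^w * y) B"
  unfolding H_def Hfun_def by (simp add: power_mult)

lemma H_abs: assumes y: "0 \<le> y" shows "\<bar>H w y\<bar> \<le> (2*y + B + 2*Mbar) * (a^2)^w"
proof -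
  have t1: "\<bar>(abar^2)^w * y\<bar> \<le> y" using ab2le1[of w] y by (simp add: abs_mult mult_left_le_one_le)
  have t2': "0 \<le> Mbar * ((a^2)^w - 1)" using Mb a2ge1[of w] by simp
  have t2: "\<bar>Mbar * ((a^2)^w - 1)\<bar> \<le> Mbar * (a^2)^w" using t2' Mb by (simp add: right_diff_distrib)
  have t3a: "(c^2)^w * y \<le> y" using c2le1[of w] y by (simp add: mult_left_le_one_le)
  have t3b: "0 \<le> (c^2)^w * y" using y by simp
  have t3: "\<bar>max ((c^2)^w * y) B\<bar> \<le> y + B" using t3a t3b Bp by (auto simp: max_def)
  have "\<bar>H w y\<bar> \<le> y + Mbar * (a^2)^w + (y + B)" unfolding H_alt using t1 t2 t3 by linarith
  also have "\<dots> \<le> (2*y + B + 2*Mbar) * (a^2)^w"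
  proof -
    have "(2*y + B) * 1 \<le> (2*y + B) * (a^2)^w" using a2ge1[of w] y Bp by (intro mult_left_mono) auto
    moreover have "0 \<le> Mbar * (a^2)^w" using Mb a2ge1[of w] by simp
    ultimately show ?thesis by (simp add: algebra_simps)
  qed
  finally show ?thesis .
qed

lemma summable_H: assumes i: "i < n" and y: "0 \<le> y"
  shows "summable (\<lambda>k. H (k+\<theta>) y * W k i)"
proof (rule summable_W[OF i, of _ "(2*y + B + 2*Mbar) * (a^2)^\<theta>"])
  fix k show "\<bar>H (k+\<theta>) y\<bar> \<le> (2*y + B + 2*Mbar) * (a^2)^\<theta> * (a^2)^k"
    using H_abs[OF y, of "k+\<theta>"] by (simp add: power_add mult_ac)
qed

lemma H_le: assumes y: "0 \<le> y" shows "H w y \<le> Mbar * (a^2)^w"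
proof -
  have "(abar^2)^w * y \<le> (c^2)^w * y" using abc[of w] y by (rule mult_right_mono)
  moreover have "(c^2)^w * y \<le> max ((c^2)^w * y) B" by simp
  ultimately show ?thesis unfolding H_alt using Mb by (simp add: right_diff_distrib)
qed

lemma H_shift: "H (k+t) (y0 / (c^2)^t) = (abar^2)^k * y0 * (abar^2/c^2)^t + Mbar * ((a^2)^k * (a^2)^t - 1) - max ((c^2)^k * y0) B"
proof -
  have c0: "(c^2)^t \<noteq> 0" using c2pos by simp
  have e1: "(abar^2)^(k+t) * (y0 / (c^2)^t) = (abar^2)^k * y0 * (abar^2/c^2)^t"
    using c0 by (simp add: power_add power_divide field_simps)
  have e2: "(c^2)^(k+t) * (y0 / (c^2)^t) = (c^2)^k * y0"
    using c0 by (simp add: power_add field_simps)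
  show ?thesis unfolding H_alt e1 e2 by (simp add: power_add)
qed

lemma conv_term: assumes D: "0 < D" and td: "\<theta> \<le> D" and y0: "0 \<le> y0"
  shows "real D * H (k+\<theta>) (y0/(c^2)^\<theta>) \<le> real (D-\<theta>) * H (k+0) (y0/(c^2)^0) + real \<theta> * H (k+D) (y0/(c^2)^D)"
proof -
  define r where "r = abar^2/c^2"
  define \<alpha> where "\<alpha> = (abar^2)^k * y0"
  define \<beta> where "\<beta> = Mbar * (a^2)^k"
  define \<gamma> where "\<gamma> = Mbar + max ((c^2)^k * y0) B"
  have r0: "0 \<le> r" unfolding r_def using c2pos by simp
  have al: "0 \<le> \<alpha>" unfolding \<alpha>_def using y0 by simp
  have be: "0 \<le> \<beta>" unfolding \<beta>_def using Mb by simp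
  have Hs: "H (k+t) (y0/(c^2)^t) = \<alpha> * r^t + \<beta> * (a^2)^t - \<gamma>" for t
    unfolding H_shift r_def \<alpha>_def \<beta>_def \<gamma>_def by (simp add: algebra_simps)
  have p1: "real D * r^\<theta> \<le> real (D - \<theta>) + real \<theta> * r^D" by (rule pow_convex[OF r0 td])
  have p2: "real D * (a^2)^\<theta> \<le> real (D - \<theta>) + real \<theta> * (a^2)^D" by (rule pow_convex[OF _ td]) simp
  have q1: "\<alpha> * (real D * r^\<theta>) \<le> \<alpha> * (real (D - \<theta>) + real \<theta> * r^D)" using p1 al by (rule mult_left_mono)
  have q2: "\<beta> * (real D * (a^2)^\<theta>) \<le> \<beta> * (real (D - \<theta>) + real \<theta> * (a^2)^D)" using p2 be by (rule mult_left_mono)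
  have dd: "real (D - \<theta>) = real D - real \<theta>" using td by simp
  show ?thesis unfolding Hs using q1 q2 dd by (simp add: algebra_simps)
qed

lemma Jc_conv: assumes D: "0 < D" and td: "\<theta> \<le> D" and y0: "0 \<le> y0" and i: "i < n"
  shows "real D * Jc \<theta> i (y0/(c^2)^\<theta>) \<le> real (D-\<theta>) * Jc 0 i y0 + real \<theta> * Jc D i (y0/(c^2)^D)"
proof -
  have yt: "0 \<le> y0/(c^2)^t" for t using y0 c2pos by simp
  note s1 = summable_H[OF i yt, of \<theta> \<theta>] and s0 = summable_H[OF i y0, of 0] and sD = summable_H[OF i yt, of D D]
  have "real D * Jc \<theta> i (y0/(c^2)^\<theta>) = (\<Sum>k. real D * (H (k+\<theta>) (y0/(c^2)^\<theta>) * W k i))"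
    unfolding Jc_def by (rule suminf_mult[OF s1, symmetric])
  also have "\<dots> \<le> (\<Sum>k. real (D-\<theta>) * (H (k+0) y0 * W k i) + real \<theta> * (H (k+D) (y0/(c^2)^D) * W k i))"
  proof (rule suminf_le)
    fix k
    have "real D * H (k+\<theta>) (y0/(c^2)^\<theta>) * W k i \<le> (real (D-\<theta>) * H (k+0) (y0/(c^2)^0) + real \<theta> * H (k+D) (y0/(c^2)^D)) * W k i"
      by (rule mult_right_mono[OF conv_term[OF D td y0] W_nonneg[OF i]])
    thus "real D * (H (k+\<theta>) (y0/(c^2)^\<theta>) * W k i) \<le> real (D-\<theta>) * (H (k+0) y0 * W k i) + real \<theta> * (H (k+D) (y0/(c^2)^D) * W k i)"
      by (simp add: algebra_simps)
  qed (use s1 s0 sD in \<open>auto intro!: summable_mult summable_add\<close>)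
  also have "\<dots> = real (D-\<theta>) * Jc 0 i y0 + real \<theta> * Jc D i (y0/(c^2)^D)"
    unfolding Jc_def
    by (subst suminf_add[symmetric]) (use s0 sD in \<open>auto intro!: summable_mult simp: suminf_mult\<close>)
  finally show ?thesis .
qed


definition "q D k = (B / c^(2*D)) * ((abar^2)^D * (abar^2)^k - (c^2)^D * (c^2)^k) + Mbar * ((a^2)^D * (a^2)^k - 1^D * 1^k)"

lemma qaux:
  fixes P Qc y0 :: real
  assumes "0 \<le> P" "P \<le> Qc" "Qc \<le> 1" "0 \<le> y0" "0 < B"
  shows "P*y0 - max (Qc*y0) B \<le> B*P - B*Qc"
proof (cases "B \<le> y0")
  case True
  have "(P - Qc) * y0 \<le> (P - Qc) * B" using assms True by (intro mult_left_mono_neg) auto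
  moreover have "Qc*y0 \<le> max (Qc*y0) B" by simp
  ultimately show ?thesis by (simp add: algebra_simps)
next
  case False
  have "P * y0 \<le> P * B" using assms False by (intro mult_left_mono) auto
  moreover have "Qc * B \<le> 1 * B" using assms by (intro mult_right_mono) auto
  moreover have "B \<le> max (Qc*y0) B" by simp
  ultimately show ?thesis by (simp add: algebra_simps)
qed

lemma Q_term: assumes y0: "0 \<le> y0" shows "H (k+D) (y0/(c^2)^D) \<le> q D k"
proof -
  define r where "r = abar^2/c^2"
  have r0: "0 \<le> r" unfolding r_def using c2pos by simp
  have r1: "r \<le> 1" unfolding r_def using c2pos ab by simp
  define P where "P = (abar^2)^k * r^D"
  have P0: "0 \<le> P" unfolding P_def using r0 by simp
  have "P \<le> (abar^2)^k * 1" unfolding P_def using r0 r1 by (intro mult_left_mono power_le_one) auto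
  hence PQ: "P \<le> (c^2)^k" using abc[of k] by simp
  have cD: "c^(2*D) = (c^2)^D" by (simp add: power_mult)
  have cD0: "(c^2)^D \<noteq> 0" using c2pos by simp
  have qe: "q D k = B*P - B*(c^2)^k + Mbar * ((a^2)^k * (a^2)^D - 1)"
    unfolding q_def P_def r_def cD using cD0 by (simp add: power_divide field_simps)
  have He: "H (k+D) (y0/(c^2)^D) = P*y0 + Mbar * ((a^2)^k * (a^2)^D - 1) - max ((c^2)^k * y0) B"
    unfolding H_shift P_def r_def by (simp add: algebra_simps)
  show ?thesis unfolding qe He using qaux[OF P0 PQ c2le1 y0 Bp] by simp
qed

lemma Jc_D_le: assumes y0: "0 \<le> y0" and i: "i < n"
  shows "Jc D i (y0/(c^2)^D) \<le> (\<Sum>k. q D k * W k i)"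
proof -
  have yt: "0 \<le> y0/(c^2)^D" using y0 c2pos by simp
  have sq: "summable (\<lambda>k. q D k * W k i)"
  proof (rule summable_W[OF i, of _ "\<bar>B / c^(2*D)\<bar> * ((abar^2)^D + (c^2)^D) + Mbar * ((a^2)^D + 1)"])
    fix k
    have "\<bar>q D k\<bar> \<le> \<bar>B / c^(2*D)\<bar> * ((abar^2)^D * (abar^2)^k + (c^2)^D * (c^2)^k) + Mbar * ((a^2)^D * (a^2)^k + 1)"
    proof -
      define X1 where "X1 = (abar^2)^D * (abar^2)^k"
      define X2 where "X2 = (c^2)^D * (c^2)^k"
      define Y where "Y = (a^2)^D * (a^2)^k"
      have X1: "0 \<le> X1" and X2: "0 \<le> X2" and Y: "0 \<le> Y" unfolding X1_def X2_def Y_def by auto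
      have "\<bar>q D k\<bar> \<le> \<bar>B / c^(2*D)\<bar> * \<bar>X1 - X2\<bar> + Mbar * \<bar>Y - 1\<bar>"
        unfolding q_def X1_def[symmetric] X2_def[symmetric] Y_def[symmetric] using Mb
        by (simp add: abs_mult order_trans[OF abs_triangle_ineq])
      also have "\<dots> \<le> \<bar>B / c^(2*D)\<bar> * (X1 + X2) + Mbar * (Y + 1)"
        using X1 X2 Y Mb by (intro add_mono mult_left_mono) auto
      finally show ?thesis unfolding X1_def X2_def Y_def .
    qed
    also have "\<dots> \<le> (\<bar>B / c^(2*D)\<bar> * ((abar^2)^D + (c^2)^D) + Mbar * ((a^2)^D + 1)) * (a^2)^k"
    proof -
      have h1: "(abar^2)^k \<le> (a^2)^k" using ab2le1[of k] a2ge1[of k] by linarith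
      have h2: "(c^2)^k \<le> (a^2)^k" using c2le1[of k] a2ge1[of k] by linarith
      have h3: "1 \<le> (a^2)^k" by (rule a2ge1)
      have u1: "(abar^2)^D * (abar^2)^k \<le> (abar^2)^D * (a^2)^k" using h1 by (intro mult_left_mono) auto
      have u2: "(c^2)^D * (c^2)^k \<le> (c^2)^D * (a^2)^k" using h2 by (intro mult_left_mono) auto
      have u3: "(a^2)^D * 1 \<le> (a^2)^D * (a^2)^k" using h3 by (intro mult_left_mono) auto
      have v1: "(abar^2)^D * (abar^2)^k + (c^2)^D * (c^2)^k \<le> ((abar^2)^D + (c^2)^D) * (a^2)^k"
        using u1 u2 by (simp add: distrib_right)
      have v2: "(a^2)^D * (a^2)^k + 1 \<le> ((a^2)^D + 1) * (a^2)^k"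
        using h3 by (simp add: distrib_right)
      have w1: "\<bar>B / c^(2*D)\<bar> * ((abar^2)^D * (abar^2)^k + (c^2)^D * (c^2)^k) \<le> \<bar>B / c^(2*D)\<bar> * (((abar^2)^D + (c^2)^D) * (a^2)^k)"
        using v1 by (intro mult_left_mono) auto
      have w2: "Mbar * ((a^2)^D * (a^2)^k + 1) \<le> Mbar * (((a^2)^D + 1) * (a^2)^k)"
        using v2 Mb by (intro mult_left_mono) auto
      show ?thesis using w1 w2 by (simp add: algebra_simps)
    qed
    finally show "\<bar>q D k\<bar> \<le> (\<bar>B / c^(2*D)\<bar> * ((abar^2)^D + (c^2)^D) + Mbar * ((a^2)^D + 1)) * (a^2)^k" .
  qed
  show ?thesis unfolding Jc_def
    by (rule suminf_le) (use summable_H[OF i yt] sq Q_term[OF y0] W_nonneg[OF i] in \<open>auto intro: mult_right_mono\<close>)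
qed


lemma Jc0_le: assumes y: "0 \<le> y" and i: "i < n"
  shows "Jc 0 i y \<le> (\<Sum>m<n. A $$ (m,i) * Jc 1 m y)"
proof -
  note sm = summable_H[OF _ y]
  have "Jc 0 i y = H 0 y * W 0 i + (\<Sum>k. H (Suc k) y * W (Suc k) i)"
    unfolding Jc_def using suminf_split_head[OF sm[OF i, of 0]] by simp
  also have "(\<Sum>k. H (Suc k) y * W (Suc k) i) = (\<Sum>k. \<Sum>m<n. A $$ (m,i) * (H (k+1) y * W k m))"
    using i by (intro suminf_cong) (simp add: W_Suc sum_distrib_left algebra_simps)
  also have "\<dots> = (\<Sum>m<n. \<Sum>k. A $$ (m,i) * (H (k+1) y * W k m))"
  proof (rule suminf_sum)
    fix m assume "m \<in> {..<n}"
    thus "summable (\<lambda>k. A $$ (m,i) * (H (k+1) y * W k m))" by (intro summable_mult summable_H[OF _ y]) auto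
  qed
  also have "\<dots> = (\<Sum>m<n. A $$ (m,i) * Jc 1 m y)"
  proof (intro sum.cong refl)
    fix m assume m: "m \<in> {..<n}"
    show "(\<Sum>k. A $$ (m,i) * (H (k+1) y * W k m)) = A $$ (m,i) * Jc 1 m y"
      unfolding Jc_def by (rule suminf_mult[OF summable_H[OF _ y]]) (use m in auto)
  qed
  finally have eq: "Jc 0 i y = H 0 y * W 0 i + (\<Sum>m<n. A $$ (m,i) * Jc 1 m y)" .
  have "H 0 y \<le> 0" unfolding H_alt by simp
  moreover have "0 \<le> W 0 i" by (rule W_nonneg[OF i])
  ultimately have "H 0 y * W 0 i \<le> 0" by (simp add: mult_nonpos_nonneg)
  thus ?thesis using eq by simp
qed

lemma Qvec_eq: assumes i: "i < n"
  shows "Qvec n a abar c Mbar B P1 e D $ i = (\<Sum>k. q D k * W k i)"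
proof -
  have b1: "\<bar>abar^2\<bar> \<le> a^2" using ab c2 a2 by simp
  have b2: "\<bar>c^2\<bar> \<le> a^2" using c2 a2 by simp
  have b3: "\<bar>a^2\<bar> \<le> a^2" by simp
  have b4: "\<bar>1::real\<bar> \<le> a^2" using a2 by simp
  have dimZ: "dim_vec (Zvec n P1 e D b) = n" if "\<bar>b\<bar> \<le> a^2" for b
    unfolding Zvec_def A_def[symmetric] inv_eq[OF that] by simp
  have sums: "(\<lambda>k. b^k * W k i) sums (\<Sum>k. b^k * W k i)" if "\<bar>b\<bar> \<le> a^2" for b
  proof (rule summable_sums, rule summable_W[OF i, of _ 1])
    fix k show "\<bar>b^k\<bar> \<le> 1 * (a^2)^k" using that by (simp add: power_abs power_mono)
  qed
  define S where "S b = (\<Sum>k. b^k * W k i)" for b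
  have "Qvec n a abar c Mbar B P1 e D $ i =
    (B / c^(2*D)) * ((abar^2)^D * S (abar^2) - (c^2)^D * S (c^2)) + Mbar * ((a^2)^D * S (a^2) - 1^D * S 1)"
    unfolding Qvec_def S_def using i dimZ[OF b1] dimZ[OF b2] dimZ[OF b3] dimZ[OF b4]
    by (simp add: Zvec_eq[OF b1 i] Zvec_eq[OF b2 i] Zvec_eq[OF b3 i] Zvec_eq[OF b4 i])
  moreover have "(\<lambda>k. q D k * W k i) sums ((B / c^(2*D)) * ((abar^2)^D * S (abar^2) - (c^2)^D * S (c^2)) + Mbar * ((a^2)^D * S (a^2) - 1^D * S 1))"
  proof -
    have "(\<lambda>k. (B / c^(2*D)) * ((abar^2)^D * ((abar^2)^k * W k i) - (c^2)^D * ((c^2)^k * W k i)) + Mbar * ((a^2)^D * ((a^2)^k * W k i) - 1^D * (1^k * W k i)))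
      sums ((B / c^(2*D)) * ((abar^2)^D * S (abar^2) - (c^2)^D * S (c^2)) + Mbar * ((a^2)^D * S (a^2) - 1^D * S 1))"
      unfolding S_def
      by (intro sums_add sums_mult sums_diff sums[OF b1] sums[OF b2] sums[OF b3] sums[OF b4])
    moreover have "(\<lambda>k. q D k * W k i) = (\<lambda>k. (B / c^(2*D)) * ((abar^2)^D * ((abar^2)^k * W k i) - (c^2)^D * ((c^2)^k * W k i)) + Mbar * ((a^2)^D * ((a^2)^k * W k i) - 1^D * (1^k * W k i)))"
      by (rule ext) (simp only: q_def distrib_right left_diff_distrib mult.assoc)
    ultimately show ?thesis by simp
  qed
  ultimately show ?thesis by (simp add: sums_unique)
qed


lemma core_main: assumes D: "0 < D" and Qneg: "\<forall>i<n. (\<Sum>k. q D k * W k i) < 0"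
  shows "\<forall>\<theta>\<in>{1..D}. \<forall>i<n. \<forall>y\<ge>0. Jc \<theta> i y < 0"
proof -
  define Qs where "Qs i = (\<Sum>k. q D k * W k i)" for i
  define Qm where "Qm = Max (Qs ` {..<n})"
  have "0 \<in> {..<n}" using n by simp
  hence ne: "{..<n} \<noteq> {}" by blast
  have "Qm \<in> Qs ` {..<n}" unfolding Qm_def by (rule Max_in) (use ne in auto)
  then obtain i0 where i0: "i0 < n" and Qmi: "Qm = Qs i0" by auto
  have Qm: "Qm < 0" unfolding Qmi Qs_def using Qneg i0 by blast
  have Qle: "i < n \<Longrightarrow> Qs i \<le> Qm" for i unfolding Qm_def by (rule Max_ge) auto
  define G where "G i = (\<Sum>k. (Mbar * (a^2)^(k+1)) * W k i)" for i
  have Jc1G: "Jc 1 l y \<le> G l" if "l < n" "0 \<le> y" for l y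
    unfolding Jc_def G_def
  proof (rule suminf_le)
    fix k show "H (k+1) y * W k l \<le> Mbar * (a^2)^(k+1) * W k l"
      by (rule mult_right_mono[OF H_le[OF that(2)] W_nonneg[OF that(1)]])
    show "summable (\<lambda>k. H (k+1) y * W k l)" by (rule summable_H[OF that])
    show "summable (\<lambda>k. Mbar * (a^2)^(k+1) * W k l)"
    proof (rule summable_W[OF that(1), of _ "Mbar * a^2"])
      fix k show "\<bar>Mbar * (a^2)^(k+1)\<bar> \<le> Mbar * a^2 * (a^2)^k" using Mb by (simp add: abs_mult)
    qed
  qed
  define T where "T = {Jc 1 l y | l y. l < n \<and> 0 \<le> y}"
  define S where "S = Sup T"
  have Tne: "T \<noteq> {}" unfolding T_def using n by force
  have Gb: "G l \<le> (\<Sum>j<n. \<bar>G j\<bar>)" if "l < n" for l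
  proof -
    have "G l \<le> \<bar>G l\<bar>" by simp
    also have "\<bar>G l\<bar> \<le> (\<Sum>j<n. \<bar>G j\<bar>)" by (rule member_le_sum) (use that in auto)
    finally show ?thesis .
  qed
  have Tbdd: "bdd_above T"
  proof -
    have "\<forall>t\<in>T. t \<le> (\<Sum>j<n. \<bar>G j\<bar>)"
    proof
      fix t assume "t \<in> T"
      then obtain l y where t: "t = Jc 1 l y" "l < n" "0 \<le> y" unfolding T_def by blast
      have "Jc 1 l y \<le> G l" by (rule Jc1G[OF t(2,3)])
      also have "\<dots> \<le> (\<Sum>j<n. \<bar>G j\<bar>)" by (rule Gb[OF t(2)])
      finally show "t \<le> (\<Sum>j<n. \<bar>G j\<bar>)" using t(1) by simp
    qed
    thus ?thesis unfolding bdd_above_def by blast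
  qed
  have Sup1: "Jc 1 l y \<le> S" if "l < n" "0 \<le> y" for l y
  proof -
    have "Jc 1 l y \<in> T" unfolding T_def using that by blast
    thus ?thesis unfolding S_def by (rule cSup_upper[OF _ Tbdd])
  qed
  have c2p: "0 < c^2" by (rule c2pos)
  have J0bound: "Jc 0 i y0 \<le> max S 0" if "i < n" "0 \<le> y0" for i y0
  proof -
    have "Jc 0 i y0 \<le> (\<Sum>m<n. A $$ (m,i) * Jc 1 m y0)" by (rule Jc0_le[OF that(2,1)])
    also have "\<dots> \<le> (\<Sum>m<n. A $$ (m,i) * max S 0)"
    proof (rule sum_mono)
      fix m assume m: "m \<in> {..<n}"
      have "Jc 1 m y0 \<le> max S 0" using Sup1[of m y0] m that(2) by simp
      thus "A $$ (m,i) * Jc 1 m y0 \<le> A $$ (m,i) * max S 0"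
        using A_nonneg[of m i] m that(1) by (intro mult_left_mono) auto
    qed
    also have "\<dots> = e $ i * max S 0" by (simp only: sum_distrib_right[symmetric] A_colsum[OF that(1)])
    also have "\<dots> \<le> 1 * max S 0" using e01 that(1) by (intro mult_right_mono) auto
    finally show ?thesis by simp
  qed
  have step: "real D * Jc \<theta> i y \<le> real (D - \<theta>) * max S 0 + real \<theta> * Qm"
    if "1 \<le> \<theta>" "\<theta> \<le> D" "i < n" "0 \<le> y" for \<theta> i y
  proof -
    define y0 where "y0 = y * (c^2)^\<theta>"
    have y0: "0 \<le> y0" unfolding y0_def using that c2p by simp
    have yy: "y0 / (c^2)^\<theta> = y" unfolding y0_def using c2p by simp
    have "real D * Jc \<theta> i y \<le> real (D-\<theta>) * Jc 0 i y0 + real \<theta> * Jc D i (y0/(c^2)^D)"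
      using Jc_conv[OF D that(2) y0 that(3)] unfolding yy .
    also have "\<dots> \<le> real (D-\<theta>) * max S 0 + real \<theta> * Qm"
    proof (rule add_mono)
      show "real (D-\<theta>) * Jc 0 i y0 \<le> real (D-\<theta>) * max S 0"
        by (intro mult_left_mono J0bound[OF that(3) y0]) auto
      have "Jc D i (y0/(c^2)^D) \<le> Qs i" unfolding Qs_def by (rule Jc_D_le[OF y0 that(3)])
      also have "\<dots> \<le> Qm" by (rule Qle[OF that(3)])
      finally show "real \<theta> * Jc D i (y0/(c^2)^D) \<le> real \<theta> * Qm" by (intro mult_left_mono) auto
    qed
    finally show ?thesis .
  qed
  have Sneg: "S < 0"
  proof (rule ccontr)
    assume "\<not> S < 0"
    hence S0: "0 \<le> S" by simp
    have "Sup T \<le> (real (D - 1) * S + Qm) / real D"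
    proof (rule cSup_least[OF Tne])
      fix t assume "t \<in> T"
      then obtain l y where t: "t = Jc 1 l y" "l < n" "0 \<le> y" unfolding T_def by auto
      have "real D * Jc 1 l y \<le> real (D - 1) * max S 0 + real 1 * Qm"
        by (rule step) (use t D in auto)
      hence "real D * t \<le> real (D - 1) * S + Qm" using t(1) S0 by simp
      thus "t \<le> (real (D - 1) * S + Qm) / real D" using D by (simp add: field_simps)
    qed
    hence "S \<le> (real (D - 1) * S + Qm) / real D" unfolding S_def[symmetric] .
    hence "real D * S \<le> real (D - 1) * S + Qm" using D by (simp add: field_simps)
    moreover have "real (D - 1) = real D - 1" using D by simp
    ultimately have "S \<le> Qm" by (simp add: algebra_simps)
    thus False using Qm S0 by simp
  qed
  show ?thesis
  proof (intro ballI allI impI)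
    fix \<theta> i and y :: real assume th: "\<theta> \<in> {1..D}" and i: "i < n" and y: "0 \<le> y"
    have "real D * Jc \<theta> i y \<le> real (D - \<theta>) * max S 0 + real \<theta> * Qm"
      by (rule step) (use th i y in auto)
    also have "\<dots> = real \<theta> * Qm" using Sneg by simp
    also have "\<dots> < 0" using Qm th by (simp add: mult_pos_neg)
    finally have "real D * Jc \<theta> i y < 0" .
    thus "Jc \<theta> i y < 0" using D by (simp add: mult_less_0_iff)
  qed
qed


lemma Jfun_eq:
  assumes P0: "column_stochastic n P0" and g: "g < n"
  shows "Jfun n a abar c Mbar B P0 P1 e \<theta> x g =
     (\<Sum>i<n. ((P0 ^\<^sub>m (\<theta> - 1) * P1) *\<^sub>v unit_vec n g) $ i * Jc \<theta> i (x^2))"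
proof -
  define V where "V = P0 ^\<^sub>m (\<theta> - 1) * P1"
  define vv where "vv = V *\<^sub>v unit_vec n g"
  have P0c: "P0 \<in> carrier_mat n n" using P0 unfolding column_stochastic_def by auto
  have Vc: "V \<in> carrier_mat n n" unfolding V_def using P0c P1c by auto
  have vvc: "vv \<in> carrier_vec n" unfolding vv_def using Vc by auto
  have trm: "dvec n e \<bullet> (((A ^\<^sub>m k) * P0 ^\<^sub>m (\<theta> - 1) * P1) *\<^sub>v unit_vec n g) = (\<Sum>i<n. W k i * vv $ i)" for k
  proof -
    have "((A ^\<^sub>m k) * P0 ^\<^sub>m (\<theta> - 1) * P1) = A ^\<^sub>m k * V"
      unfolding V_def using P0c P1c by (simp add: assoc_mult_mat[of _ n n _ n _ n])
    hence "((A ^\<^sub>m k) * P0 ^\<^sub>m (\<theta> - 1) * P1) *\<^sub>v unit_vec n g = A ^\<^sub>m k *\<^sub>v vv"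
      unfolding vv_def using Vc by (simp add: assoc_mult_mat_vec[of _ n n _ n])
    hence "dvec n e \<bullet> (((A ^\<^sub>m k) * P0 ^\<^sub>m (\<theta> - 1) * P1) *\<^sub>v unit_vec n g)
       = (\<Sum>l<n. dvec n e $ l * (\<Sum>i<n. (A ^\<^sub>m k) $$ (l,i) * vv $ i))"
      using vvc by (simp add: scalar_prod_def lessThan_atLeast0 dvec_def)
    also have "\<dots> = (\<Sum>i<n. W k i * vv $ i)"
      unfolding W_def by (simp add: sum_distrib_left sum_distrib_right mult.assoc) (rule sum.swap)
    finally show ?thesis .
  qed
  have "Jfun n a abar c Mbar B P0 P1 e \<theta> x g = (\<Sum>k. H (k+\<theta>) (x^2) * (\<Sum>i<n. W k i * vv $ i))"
    unfolding Jfun_def A_def[symmetric] trm H_def ..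
  also have "\<dots> = (\<Sum>k. \<Sum>i<n. vv $ i * (H (k+\<theta>) (x^2) * W k i))"
    by (intro suminf_cong) (simp add: sum_distrib_left sum_distrib_right mult_ac)
  also have "\<dots> = (\<Sum>i<n. \<Sum>k. vv $ i * (H (k+\<theta>) (x^2) * W k i))"
  proof (rule suminf_sum)
    fix i assume "i \<in> {..<n}"
    thus "summable (\<lambda>k. vv $ i * (H (k+\<theta>) (x^2) * W k i))" by (intro summable_mult summable_H) auto
  qed
  also have "\<dots> = (\<Sum>i<n. vv $ i * Jc \<theta> i (x^2))"
  proof (intro sum.cong refl)
    fix i assume "i \<in> {..<n}"
    thus "(\<Sum>k. vv $ i * (H (k+\<theta>) (x^2) * W k i)) = vv $ i * Jc \<theta> i (x^2)"
      unfolding Jc_def by (intro suminf_mult summable_H) auto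
  qed
  finally show ?thesis unfolding vv_def V_def .
qed

end


theorem mainTheorem5:
  fixes n :: nat and a L abar c M Mbar B :: real and P0 P1 :: "real mat" and e :: "real vec"
    and D :: nat
  assumes n: "n \<ge> 1"
    and a: "\<bar>a\<bar> > 1"
    and abar: "abar = a + L" and abar_pos: "0 < abar^2" and abar_lt: "abar^2 < 1"
    and c1: "abar^2 < c^2" and c2: "c^2 < 1"
    and M: "M > 0" and Bpos: "B > 0" and Mbar: "Mbar = M / (a^2 - 1)"
    and P0: "column_stochastic n P0" and P1: "column_stochastic n P1"
    and e: "e \<in> carrier_vec n" and e01: "\<forall>i<n. 0 \<le> e $ i \<and> e $ i \<le> 1"
    and rho: "a^2 * rho (P1 * diagE n e) < 1"
    and B0: "B \<ge> Mbar * ln (a^2) / ln (c^2 / abar^2)"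
    and Q: "\<forall>i<n. Qvec n a abar c Mbar B P1 e D $ i < 0"
  shows "\<forall>\<theta>\<in>{1..D}. \<forall>x::real. \<forall>g<n. Jfun n a abar c Mbar B P0 P1 e \<theta> x g < 0"
proof (intro ballI allI impI)
  fix \<theta> x g assume th: "\<theta> \<in> {1..D}" and g: "g < n"
  have D: "0 < D" using th by auto
  have "1 * 1 < \<bar>a\<bar> * \<bar>a\<bar>" using a by (intro mult_strict_mono) auto
  hence a2: "1 < a^2" by (simp add: power2_eq_square)
  have Mb: "0 \<le> Mbar" unfolding Mbar using M a2 by simp
  interpret core n a abar c Mbar B P1 e
    by unfold_locales (use n a2 c1 c2 Mb Bpos P1 e e01 rho in auto)
  have Qn: "\<forall>i<n. (\<Sum>k. q D k * W k i) < 0" using Q Qvec_eq by auto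
  have J: "\<forall>i<n. Jc \<theta> i (x^2) < 0" using core_main[OF D Qn] th by auto
  define V where "V = P0 ^\<^sub>m (\<theta> - 1) * P1"
  have Vcs: "column_stochastic n V" unfolding V_def by (rule cs_mult[OF cs_pow[OF P0] P1])
  have Vc: "V \<in> carrier_mat n n" using Vcs unfolding column_stochastic_def by auto
  have vv: "i < n \<Longrightarrow> (V *\<^sub>v unit_vec n g) $ i = V $$ (i,g)" for i
    using Vc g by simp
  have Jeq: "Jfun n a abar c Mbar B P0 P1 e \<theta> x g = (\<Sum>i<n. V $$ (i,g) * Jc \<theta> i (x^2))"
    unfolding Jfun_eq[OF P0 g] V_def[symmetric] by (intro sum.cong refl) (simp add: vv)
  have nn: "\<forall>i<n. 0 \<le> V $$ (i,g)" using Vcs g unfolding column_stochastic_def by auto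
  have s1: "(\<Sum>i<n. V $$ (i,g)) = 1" using Vcs g unfolding column_stochastic_def by auto
  have "\<exists>i\<in>{..<n}. V $$ (i,g) \<noteq> 0"
  proof (rule ccontr)
    assume "\<not> ?thesis"
    hence "(\<Sum>i<n. V $$ (i,g)) = 0" by simp
    thus False using s1 by simp
  qed
  then obtain i0 where i0: "i0 < n" "V $$ (i0,g) \<noteq> 0" by auto
  have "(\<Sum>i<n. V $$ (i,g) * Jc \<theta> i (x^2)) < (\<Sum>i<n. (0::real))"
  proof (rule sum_strict_mono_ex1)
    show "\<forall>i\<in>{..<n}. V $$ (i,g) * Jc \<theta> i (x^2) \<le> 0"
      using nn J by (auto intro: mult_nonneg_nonpos less_imp_le)
    show "\<exists>i\<in>{..<n}. V $$ (i,g) * Jc \<theta> i (x^2) < 0"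
      using i0 nn J by (intro bexI[of _ i0]) (auto intro!: mult_pos_neg simp: order_le_less)
  qed simp
  thus "Jfun n a abar c Mbar B P0 P1 e \<theta> x g < 0" unfolding Jeq by simp
qed

end
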